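(* Let $n\geqslant1$, $a,b>0$, $\sigma\in(0,1)\cup(1,+\infty)$, and let $\widehat v(t,\xi)=\frac{\lambda_+e^{\lambda_-t}-\lambda_-e^{\lambda_+t}}{\lambda_+-\lambda_-}\widehat v_0+\frac{e^{\lambda_+t}-e^{\lambda_-t}}{\lambda_+-\lambda_-}\widehat v_1$ with $\lambda_\pm=\frac12\big(-1\pm\sqrt{1-4(a|\xi|^2+b|\xi|^{2\sigma})}\big)$ (the Fourier transform of the solution of $v_{tt}-a\Delta v+b(-\Delta)^\sigma v+v_t=0$, $v(0)=v_0$, $v_t(0)=v_1$). There exist $N_0>0$ sufficiently large and constants $c,C>0$ such that for all $t\geqslant0$ and all $|\xi|\geqslant N_0$: if $\sigma\in(0,1)$ then $|\widehat v|\leqslant Ce^{-ct}(|\widehat v_0|+|\xi|^{-1}|\widehat v_1|)$; if $\sigma\in(1,+\infty)$ then $|\widehat v|\leqslant Ce^{-ct}(|\widehat v_0|+|\xi|^{-\sigma}|\widehat v_1|)$.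
   Context: $(-\Delta)^\sigma$ is the Fourier multiplier with symbol $|\xi|^{2\sigma}$. *)

theory Defs
  imports "HOL-Analysis.Analysis"
begin

definition symb :: "real \<Rightarrow> real \<Rightarrow> real \<Rightarrow> real \<Rightarrow> real" where
  "symb a b \<sigma> r = a * r^2 + b * r powr (2 * \<sigma>)"

definition lam_plus :: "real \<Rightarrow> real \<Rightarrow> real \<Rightarrow> real \<Rightarrow> complex" where
  "lam_plus a b \<sigma> r = (-1 + csqrt (complex_of_real (1 - 4 * symb a b \<sigma> r))) / 2"

definition lam_minus :: "real \<Rightarrow> real \<Rightarrow> real \<Rightarrow> real \<Rightarrow> complex" where
  "lam_minus a b \<sigma> r = (-1 - csqrt (complex_of_real (1 - 4 * symb a b \<sigma> r))) / 2"

text \<open>Fourier transform of the solution at frequency xi (r = |xi|), time t,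
  with data values v0 = hat v_0(xi), v1 = hat v_1(xi).\<close>
definition vhat :: "real \<Rightarrow> real \<Rightarrow> real \<Rightarrow> real \<Rightarrow> real \<Rightarrow> complex \<Rightarrow> complex \<Rightarrow> complex" where
  "vhat a b \<sigma> r t v0 v1 =
     (let lp = lam_plus a b \<sigma> r; lm = lam_minus a b \<sigma> r in
      (lp * exp (lm * t) - lm * exp (lp * t)) / (lp - lm) * v0
      + (exp (lp * t) - exp (lm * t)) / (lp - lm) * v1)"

end

theory Submission
  imports Defs
begin

lemma core:
  fixes S t :: real and v0 v1 :: complex
  assumes S: "S \<ge> 1" and t: "t \<ge> 0"
  defines "w \<equiv> sqrt (4*S - 1)"
  defines "lp \<equiv> (-1 + \<i> * w) / 2" and "lm \<equiv> (-1 - \<i> * w) / 2"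
  shows "cmod ((lp * exp (lm * t) - lm * exp (lp * t)) / (lp - lm) * v0
      + (exp (lp * t) - exp (lm * t)) / (lp - lm) * v1)
   \<le> exp (-(1/2) * t) * (sqrt 2 * cmod v0 + sqrt 2 / sqrt S * cmod v1)"
proof -
  have wpos: "w > 0" using S by (simp add: w_def)
  have w2: "w^2 = 4*S - 1" using S by (simp add: w_def)
  have d: "lp - lm = \<i> * w" by (simp add: lp_def lm_def field_simps)
  have nd: "cmod (lp - lm) = w" using wpos by (simp add: d norm_mult)
  have e1: "cmod (exp (lm * t)) = exp (-(1/2) * t)" by (simp add: lm_def)
  have e2: "cmod (exp (lp * t)) = exp (-(1/2) * t)" by (simp add: lp_def)
  have nlp: "cmod lp = sqrt S"
  proof -
    have "cmod lp = sqrt ((1/2)^2 + (w/2)^2)" by (simp add: lp_def cmod_def)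
    also have "(1/2)^2 + (w/2)^2 = S" using w2 by (simp add: power_divide field_simps)
    finally show ?thesis .
  qed
  have nlm: "cmod lm = sqrt S"
  proof -
    have "cmod lm = sqrt ((1/2)^2 + (w/2)^2)" by (simp add: lm_def cmod_def)
    also have "(1/2)^2 + (w/2)^2 = S" using w2 by (simp add: power_divide field_simps)
    finally show ?thesis .
  qed
  define E where "E = exp (-(1/2) * t)"
  have A: "cmod (lp * exp (lm * t) - lm * exp (lp * t)) \<le> 2 * sqrt S * E"
  proof -
    have "cmod (lp * exp (lm * t) - lm * exp (lp * t)) \<le> cmod (lp * exp (lm * t)) + cmod (lm * exp (lp * t))"
      by (rule norm_triangle_ineq4)
    also have "\<dots> = 2 * sqrt S * E" unfolding norm_mult nlp nlm e1 e2 E_def by simp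
    finally show ?thesis .
  qed
  have B: "cmod (exp (lp * t) - exp (lm * t)) \<le> 2 * E"
  proof -
    have "cmod (exp (lp * t) - exp (lm * t)) \<le> cmod (exp (lp * t)) + cmod (exp (lm * t))"
      by (rule norm_triangle_ineq4)
    also have "\<dots> = 2 * E" unfolding e1 e2 E_def by simp
    finally show ?thesis .
  qed
  have r1: "2 * sqrt S / w \<le> sqrt 2"
  proof -
    have "2 * sqrt S \<le> sqrt 2 * w"
    proof (rule power2_le_imp_le)
      show "(2 * sqrt S)^2 \<le> (sqrt 2 * w)^2" using S w2 by (simp add: power_mult_distrib)
      show "0 \<le> sqrt 2 * w" using wpos by simp
    qed
    thus ?thesis using wpos by (simp add: divide_le_eq mult.commute)
  qed
  have r2: "2 / w \<le> sqrt 2 / sqrt S"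
  proof -
    have "2 * sqrt S \<le> sqrt 2 * w"
    proof (rule power2_le_imp_le)
      show "(2 * sqrt S)^2 \<le> (sqrt 2 * w)^2" using S w2 by (simp add: power_mult_distrib)
      show "0 \<le> sqrt 2 * w" using wpos by simp
    qed
    thus ?thesis using wpos S by (simp add: divide_le_eq le_divide_eq mult.commute)
  qed
  have Epos: "E > 0" by (simp add: E_def)
  have "cmod ((lp * exp (lm * t) - lm * exp (lp * t)) / (lp - lm) * v0
      + (exp (lp * t) - exp (lm * t)) / (lp - lm) * v1)
     \<le> cmod (lp * exp (lm * t) - lm * exp (lp * t)) / w * cmod v0
      + cmod (exp (lp * t) - exp (lm * t)) / w * cmod v1"
    by (rule order_trans[OF norm_triangle_ineq]) (simp add: norm_mult norm_divide nd)
  also have "\<dots> \<le> (2 * sqrt S * E) / w * cmod v0 + (2 * E) / w * cmod v1"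
    by (intro add_mono mult_right_mono divide_right_mono A B) (use wpos in auto)
  also have "\<dots> = E * ((2 * sqrt S / w) * cmod v0 + (2 / w) * cmod v1)" by (simp add: field_simps)
  also have "\<dots> \<le> E * (sqrt 2 * cmod v0 + sqrt 2 / sqrt S * cmod v1)"
    by (intro mult_left_mono add_mono mult_right_mono r1 r2) (use Epos in auto)
  finally show ?thesis by (simp add: E_def)
qed


theorem proposition3p2:
  fixes a b \<sigma> :: real
  assumes "a > 0" and "b > 0" and "\<sigma> > 0" and "\<sigma> \<noteq> 1"
  shows "\<exists>N0 > 0. \<exists>c > 0. \<exists>C > 0.
           \<forall>(\<xi> :: 'n :: euclidean_space) (t :: real) (v0 :: complex) (v1 :: complex).
             t \<ge> 0 \<and> norm \<xi> \<ge> N0 \<longrightarrow>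
             (\<sigma> < 1 \<longrightarrow> cmod (vhat a b \<sigma> (norm \<xi>) t v0 v1)
                \<le> C * exp (- c * t) * (cmod v0 + norm \<xi> powr (-1) * cmod v1)) \<and>
             (\<sigma> > 1 \<longrightarrow> cmod (vhat a b \<sigma> (norm \<xi>) t v0 v1)
                \<le> C * exp (- c * t) * (cmod v0 + norm \<xi> powr (- \<sigma>) * cmod v1))"
proof -
  note ab = assms(1,2)
  define C where "C = sqrt 2 * (1 + 1 / sqrt a + 1 / sqrt b)"
  have Cpos: "C > 0" using ab by (simp add: C_def add_pos_pos)
  have key: "cmod (vhat a b \<sigma> r t v0 v1) \<le> exp (- (1/2) * t) * (C * cmod v0 + C * r powr (-1) * cmod v1)
     \<and> cmod (vhat a b \<sigma> r t v0 v1) \<le> exp (- (1/2) * t) * (C * cmod v0 + C * r powr (-\<sigma>) * cmod v1)"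
    if r: "r \<ge> 1 + 1/a" and t: "t \<ge> 0" for r t v0 v1
  proof -
    define S where "S = symb a b \<sigma> r"
    have "1/a > 0" using ab by simp
    hence r1: "r \<ge> 1" using r by linarith
    have rpos: "r > 0" using r1 by simp
    have "a * r \<ge> 1" using r ab by (simp add: field_simps)
    hence ar2: "a * r^2 \<ge> 1" using r1 ab
      by (metis mult_le_cancel_left1 mult.assoc order_trans power2_eq_square less_imp_le mult_right_mono mult_cancel_left1)
    have bp: "b * r powr (2*\<sigma>) \<ge> 0" using ab by simp
    have Sa: "S \<ge> a * r^2" using bp by (simp add: S_def symb_def)
    have Sb: "S \<ge> b * r powr (2*\<sigma>)" using ab by (simp add: S_def symb_def)
    have S1: "S \<ge> 1" using Sa ar2 by simp
    have cs: "csqrt (complex_of_real (1 - 4 * S)) = \<i> * sqrt (4*S - 1)"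
      using S1 by simp
    have V: "vhat a b \<sigma> r t v0 v1 =
      (let lp = (-1 + \<i> * sqrt (4*S - 1)) / 2; lm = (-1 - \<i> * sqrt (4*S - 1)) / 2 in
      (lp * exp (lm * t) - lm * exp (lp * t)) / (lp - lm) * v0
      + (exp (lp * t) - exp (lm * t)) / (lp - lm) * v1)"
      unfolding vhat_def lam_plus_def lam_minus_def S_def[symmetric] cs by simp
    have M: "cmod (vhat a b \<sigma> r t v0 v1) \<le> exp (-(1/2) * t) * (sqrt 2 * cmod v0 + sqrt 2 / sqrt S * cmod v1)"
      unfolding V Let_def using core[OF S1 t] by simp
    have q1: "1 / sqrt S \<le> r powr (-1) / sqrt a"
    proof -
      have "sqrt a * r \<le> sqrt S" using Sa rpos ab
        by (metis real_sqrt_le_mono real_sqrt_mult real_sqrt_abs abs_of_pos power2_eq_square real_sqrt_mult_self) 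
      moreover have "sqrt a * r > 0" using ab rpos by simp
      ultimately show ?thesis using rpos ab S1 by (simp add: powr_minus divide_simps mult.commute)
    qed
    have q2: "1 / sqrt S \<le> r powr (-\<sigma>) / sqrt b"
    proof -
      have "sqrt (b * r powr (2*\<sigma>)) = sqrt b * r powr \<sigma>" using rpos ab
        by (simp add: real_sqrt_mult powr_half_sqrt[symmetric] powr_powr)
      hence "sqrt b * r powr \<sigma> \<le> sqrt S" using Sb by (metis real_sqrt_le_mono)
      moreover have "sqrt b * r powr \<sigma> > 0" using ab rpos by simp
      ultimately show ?thesis using rpos ab S1 by (simp add: powr_minus divide_simps mult.commute)
    qed
    have sC: "sqrt 2 \<le> C" using ab by (simp add: C_def algebra_simps)
    have sa: "sqrt 2 / sqrt a \<le> C" using ab by (simp add: C_def algebra_simps)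
    have sb: "sqrt 2 / sqrt b \<le> C" using ab by (simp add: C_def algebra_simps)
    have E: "exp (-(1/2) * t) > 0" by simp
    have P1: "sqrt 2 / sqrt S \<le> C * r powr (-1)"
    proof -
      have "sqrt 2 / sqrt S = sqrt 2 * (1 / sqrt S)" by simp
      also have "\<dots> \<le> sqrt 2 * (r powr (-1) / sqrt a)" using q1 by (intro mult_left_mono) auto
      also have "\<dots> = (sqrt 2 / sqrt a) * r powr (-1)" by simp
      also have "\<dots> \<le> C * r powr (-1)" using sa by (intro mult_right_mono) auto
      finally show ?thesis .
    qed
    have P2: "sqrt 2 / sqrt S \<le> C * r powr (-\<sigma>)"
    proof -
      have "sqrt 2 / sqrt S = sqrt 2 * (1 / sqrt S)" by simp
      also have "\<dots> \<le> sqrt 2 * (r powr (-\<sigma>) / sqrt b)" using q2 by (intro mult_left_mono) auto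
      also have "\<dots> = (sqrt 2 / sqrt b) * r powr (-\<sigma>)" by simp
      also have "\<dots> \<le> C * r powr (-\<sigma>)" using sb by (intro mult_right_mono) auto
      finally show ?thesis .
    qed
    have "cmod (vhat a b \<sigma> r t v0 v1) \<le> exp (- (1/2) * t) * (C * cmod v0 + C * r powr (-1) * cmod v1)"
    proof -
      have "sqrt 2 * cmod v0 + sqrt 2 / sqrt S * cmod v1 \<le> C * cmod v0 + C * r powr (-1) * cmod v1"
        using sC P1 by (intro add_mono mult_right_mono) auto
      hence "exp (-(1/2) * t) * (sqrt 2 * cmod v0 + sqrt 2 / sqrt S * cmod v1) \<le> exp (-(1/2) * t) * (C * cmod v0 + C * r powr (-1) * cmod v1)"
        using E by (intro mult_left_mono) auto
      thus ?thesis using M by linarith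
    qed
    moreover have "cmod (vhat a b \<sigma> r t v0 v1) \<le> exp (- (1/2) * t) * (C * cmod v0 + C * r powr (-\<sigma>) * cmod v1)"
    proof -
      have "sqrt 2 * cmod v0 + sqrt 2 / sqrt S * cmod v1 \<le> C * cmod v0 + C * r powr (-\<sigma>) * cmod v1"
        using sC P2 by (intro add_mono mult_right_mono) auto
      hence "exp (-(1/2) * t) * (sqrt 2 * cmod v0 + sqrt 2 / sqrt S * cmod v1) \<le> exp (-(1/2) * t) * (C * cmod v0 + C * r powr (-\<sigma>) * cmod v1)"
        using E by (intro mult_left_mono) auto
      thus ?thesis using M by linarith
    qed
    ultimately show ?thesis by blast
  qed
  have N: "0 < 1 + 1/a" using ab by (simp add: add_pos_pos)
  show ?thesis
    apply (rule exI[of _ "1 + 1/a"], rule conjI[OF N])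
    apply (rule exI[of _ "1/2"], rule conjI, simp)
    apply (rule exI[of _ C], rule conjI[OF Cpos])
    apply (intro allI impI conjI)
    subgoal for x t v0 v1 using key[of "norm x" t v0 v1] by (simp add: algebra_simps)
    subgoal for x t v0 v1 using key[of "norm x" t v0 v1] by (simp add: algebra_simps)
    done
qed

end
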